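(* Fix $1\le i\le h$ and let $\hat F_i\subseteq B_i$ satisfy $\sum_{e\in\hat F_i}\gamma_i(e)\le\Delta$ and be such that $(V(T_i),\hat F_i)$ is a forest of stars. Let $F_i=\{e_{j,q}:\bar e_{j,q}\in\hat F_i\}$. Then $r(F_i)\ge r(\hat F_i)$, where $r(F_i)$ is computed in the original instance (red tree $T$, costs $c$) and $r(\hat F_i)$ in the auxiliary instance (red star $T_i$, costs $c_i$).
   Context: $\mathsf{StackMST}(\gamma,\Delta)$: given a tree $T=(V,E(T))$ with red edge costs $c(e)\ge0$, activation costs $\gamma(e)\ge0$ for every pair $e\notin E(T)$ of vertices, and a budget $\Delta$, the leader selects a set $F$ of such pairs with $\sum_{e\in F}\gamma(e)\le\Delta$ and prices $p:F\to\mathbb{R}^+$; the follower computes a minimum spanning tree of $(V,E(T)\cup F)$ breaking ties in favor of the leader, whose revenue is the total price of selected edges of $F$. For a red tree (or multigraph red star) with costs $c'$ and a set $F$ of added edges, define for $e\in F$: $p_F(e)=\min_{H}\max_{e'\in E(H)\text{ red}}c'(e')$, the minimum over all simple cycles $H$ containing $e$ in the (multi)graph formed by the red edges and $F$; $r(F)$ is the revenue the leader obtains by activating $F$ with prices $p_F$. Root $T$ at its center $v_0$; $h$ is its height. For $1\le i\le h$, let $V_i=\{v_1,\dots,v_{\ell_i}\}$ be the vertices at depth $i$ and $E_i$ the edges joining them to their parents. $T_i$ is the star centered at $v_0$ with leaves $v_1,\dots,v_{\ell_i}$, with $c_i(v_0,v)=c(u,v)$ where $u$ is the parent of $v$ in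 $T$. Let $\hat T_0,\dots,\hat T_{\ell_i}$ be the components of $T-E_i$ with $v_0\in\hat T_0$, $v_j\in\hat T_j$. For $j\ne q$ in $\{0,\dots,\ell_i\}$, $e_{j,q}$ is a (fixed) pair not in $E(T)$ joining $\hat T_j$ and $\hat T_q$ of minimum activation cost; $\bar e_{j,q}=(v_j,v_q)$ with $\gamma_i(\bar e_{j,q})=\gamma(e_{j,q})$, and $B_i=\{\bar e_{j,q}\}$ is the set of edges the leader may activate in the auxiliary instance with red star $T_i$ (edges $\bar e_{0,q}$ are parallel to red edges). *)

theory Defs
  imports Complex_Main
begin

definition is_path :: "('e \<Rightarrow> 'v set) \<Rightarrow> 'e set \<Rightarrow> 'v \<Rightarrow> 'v \<Rightarrow> 'e list \<Rightarrow> 'v list \<Rightarrow> bool" where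
  "is_path ends A u v es vs \<longleftrightarrow>
     length vs = Suc (length es) \<and> distinct vs \<and> distinct es \<and> set es \<subseteq> A \<and>
     hd vs = u \<and> last vs = v \<and> (\<forall>k<length es. ends (es ! k) = {vs ! k, vs ! Suc k})"

definition reach :: "('e \<Rightarrow> 'v set) \<Rightarrow> 'e set \<Rightarrow> 'v \<Rightarrow> 'v \<Rightarrow> bool" where
  "reach ends A u v \<longleftrightarrow> (\<exists>es vs. is_path ends A u v es vs)"

text \<open>Simple cycle (in a multigraph: two parallel edges form a cycle of length 2).\<close>
definition simple_cycle :: "('e \<Rightarrow> 'v set) \<Rightarrow> 'e set \<Rightarrow> 'e list \<Rightarrow> bool" where
  "simple_cycle ends A es \<longleftrightarrow>
     2 \<le> length es \<and> distinct es \<and> set es \<subseteq> A \<and>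
     (\<exists>vs. length vs = length es \<and> distinct vs \<and>
        (\<forall>k<length es. ends (es ! k) = {vs ! k, vs ! (Suc k mod length es)}))"

definition edge_acyclic :: "('e \<Rightarrow> 'v set) \<Rightarrow> 'e set \<Rightarrow> bool" where
  "edge_acyclic ends A \<longleftrightarrow> \<not> (\<exists>es. simple_cycle ends A es)"

definition connected_on :: "('e \<Rightarrow> 'v set) \<Rightarrow> 'v set \<Rightarrow> 'e set \<Rightarrow> bool" where
  "connected_on ends V A \<longleftrightarrow> (\<forall>u\<in>V. \<forall>v\<in>V. reach ends A u v)"

definition spanning_tree :: "('e \<Rightarrow> 'v set) \<Rightarrow> 'v set \<Rightarrow> 'e set \<Rightarrow> 'e set \<Rightarrow> bool" where
  "spanning_tree ends V A S \<longleftrightarrow> S \<subseteq> A \<and> connected_on ends V S \<and> edge_acyclic ends S"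

definition forest_of_stars :: "('e \<Rightarrow> 'v set) \<Rightarrow> 'v set \<Rightarrow> 'e set \<Rightarrow> bool" where
  "forest_of_stars ends W A \<longleftrightarrow> (\<forall>e\<in>A. ends e \<subseteq> W) \<and> edge_acyclic ends A \<and>
     (\<forall>u\<in>W. \<exists>z. \<forall>e\<in>A. ends e \<subseteq> {x\<in>W. reach ends A u x} \<longrightarrow> z \<in> ends e)"

text \<open>Maximum red cost on a cycle (0 if the cycle has no red edge; this case does not arise
  for the acyclic sets F considered here).\<close>
definition red_max :: "('e \<Rightarrow> real) \<Rightarrow> 'e set \<Rightarrow> 'e list \<Rightarrow> real" where
  "red_max c R es = (if set es \<inter> R = {} then 0 else Max (c ` (set es \<inter> R)))"

definition price :: "('e \<Rightarrow> 'v set) \<Rightarrow> 'e set \<Rightarrow> ('e \<Rightarrow> real) \<Rightarrow> 'e set \<Rightarrow> 'e \<Rightarrow> real" where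
  "price ends R c F e = Min {red_max c R es | es. simple_cycle ends (R \<union> F) es \<and> e \<in> set es}"

definition follower_weight :: "('e \<Rightarrow> 'v set) \<Rightarrow> 'e set \<Rightarrow> ('e \<Rightarrow> real) \<Rightarrow> 'e set \<Rightarrow> 'e \<Rightarrow> real" where
  "follower_weight ends R c F e = (if e \<in> R then c e else price ends R c F e)"

definition is_mst :: "('e \<Rightarrow> 'v set) \<Rightarrow> 'v set \<Rightarrow> 'e set \<Rightarrow> ('e \<Rightarrow> real) \<Rightarrow> 'e set \<Rightarrow> 'e set \<Rightarrow> bool" where
  "is_mst ends V R c F S \<longleftrightarrow> spanning_tree ends V (R \<union> F) S \<and>
     (\<forall>S'. spanning_tree ends V (R \<union> F) S' \<longrightarrow>
        sum (follower_weight ends R c F) S \<le> sum (follower_weight ends R c F) S')"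

text \<open>Revenue: the follower picks an MST, ties broken in favour of the leader.\<close>
definition revenue :: "('e \<Rightarrow> 'v set) \<Rightarrow> 'v set \<Rightarrow> 'e set \<Rightarrow> ('e \<Rightarrow> real) \<Rightarrow> 'e set \<Rightarrow> real" where
  "revenue ends V R c F = Max {sum (price ends R c F) (S \<inter> F) | S. is_mst ends V R c F S}"

definition is_tree :: "'v set \<Rightarrow> 'v set set \<Rightarrow> bool" where
  "is_tree V ET \<longleftrightarrow> finite V \<and> (\<forall>e\<in>ET. \<exists>x y. x \<in> V \<and> y \<in> V \<and> x \<noteq> y \<and> e = {x, y}) \<and>
     spanning_tree id V ET ET"

definition tdist :: "'v set set \<Rightarrow> 'v \<Rightarrow> 'v \<Rightarrow> nat" where
  "tdist ET u v = (LEAST n. \<exists>es vs. is_path id ET u v es vs \<and> length es = n)"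

definition ecc :: "'v set \<Rightarrow> 'v set set \<Rightarrow> 'v \<Rightarrow> nat" where
  "ecc V ET v = Max (tdist ET v ` V)"

definition is_center :: "'v set \<Rightarrow> 'v set set \<Rightarrow> 'v \<Rightarrow> bool" where
  "is_center V ET v0 \<longleftrightarrow> v0 \<in> V \<and> (\<forall>u\<in>V. ecc V ET v0 \<le> ecc V ET u)"

definition height :: "'v set \<Rightarrow> 'v set set \<Rightarrow> 'v \<Rightarrow> nat" where
  "height V ET v0 = Max (tdist ET v0 ` V)"

definition parent :: "'v set set \<Rightarrow> 'v \<Rightarrow> 'v \<Rightarrow> 'v" where
  "parent ET v0 v = (THE u. {u, v} \<in> ET \<and> Suc (tdist ET v0 u) = tdist ET v0 v)"

definition level :: "'v set \<Rightarrow> 'v set set \<Rightarrow> 'v \<Rightarrow> nat \<Rightarrow> 'v set" where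
  "level V ET v0 i = {v \<in> V. tdist ET v0 v = i}"

definition level_edges :: "'v set \<Rightarrow> 'v set set \<Rightarrow> 'v \<Rightarrow> nat \<Rightarrow> 'v set set" where
  "level_edges V ET v0 i = (\<lambda>v. {parent ET v0 v, v}) ` level V ET v0 i"

definition comp :: "'v set \<Rightarrow> 'v set set \<Rightarrow> 'v \<Rightarrow> nat \<Rightarrow> 'v \<Rightarrow> 'v set" where
  "comp V ET v0 i j = {x \<in> V. reach id (ET - level_edges V ET v0 i) j x}"

definition cand :: "'v set \<Rightarrow> 'v set set \<Rightarrow> 'v \<Rightarrow> nat \<Rightarrow> 'v set \<Rightarrow> 'v set set" where
  "cand V ET v0 i p = {{x, y} | x y j q. p = {j, q} \<and> x \<in> comp V ET v0 i j \<and>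
       y \<in> comp V ET v0 i q \<and> {x, y} \<notin> ET}"

definition star_vertices :: "'v set \<Rightarrow> 'v set set \<Rightarrow> 'v \<Rightarrow> nat \<Rightarrow> 'v set" where
  "star_vertices V ET v0 i = insert v0 (level V ET v0 i)"

text \<open>B_i, as pairs {v_j, v_q} (only those for which some e_{j,q} exists).\<close>
definition aux_pairs :: "'v set \<Rightarrow> 'v set set \<Rightarrow> 'v \<Rightarrow> nat \<Rightarrow> 'v set set" where
  "aux_pairs V ET v0 i = {{j, q} | j q. j \<in> star_vertices V ET v0 i \<and> q \<in> star_vertices V ET v0 i \<and>
      j \<noteq> q \<and> cand V ET v0 i {j, q} \<noteq> {}}"

text \<open>Auxiliary multigraph: edge Inl v is the red star edge (v0,v) for v in V_i,
  edge Inr {j,q} is the blue edge \<bar>e_{j,q}.\<close>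
definition aux_ends :: "'v \<Rightarrow> 'v + 'v set \<Rightarrow> 'v set" where
  "aux_ends v0 = case_sum (\<lambda>v. {v0, v}) id"

definition aux_cost :: "'v set set \<Rightarrow> 'v \<Rightarrow> ('v set \<Rightarrow> real) \<Rightarrow> 'v + 'v set \<Rightarrow> real" where
  "aux_cost ET v0 c = case_sum (\<lambda>v. c {parent ET v0 v, v}) (\<lambda>_. 0)"

end

theory Submission
  imports Defs
begin
definition Rel :: "('e \<Rightarrow> 'v set) \<Rightarrow> 'e set \<Rightarrow> ('v \<times> 'v) set" where
  "Rel ends A = {(x,y). \<exists>e\<in>A. ends e = {x,y}}"

lemma Rel_sym: "sym (Rel ends A)"
proof (rule symI)
  fix x y assume "(x,y) \<in> Rel ends A"
  then obtain e where "e\<in>A" "ends e = {x,y}" unfolding Rel_def by blast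
  moreover have "{x,y} = {y,x}" by blast
  ultimately show "(y,x) \<in> Rel ends A" unfolding Rel_def by auto
qed

lemma Rel_mono: "A \<subseteq> B \<Longrightarrow> Rel ends A \<subseteq> Rel ends B"
  unfolding Rel_def by blast

lemma RelI: "e \<in> A \<Longrightarrow> ends e = {x,y} \<Longrightarrow> (x,y) \<in> Rel ends A"
  unfolding Rel_def by blast

lemma rtr_sym: "(x,y) \<in> (Rel ends A)\<^sup>* \<Longrightarrow> (y,x) \<in> (Rel ends A)\<^sup>*"
  by (meson sym_rtrancl[OF Rel_sym] symD)

lemma rtr_mono: "(x,y) \<in> (Rel ends A)\<^sup>* \<Longrightarrow> A \<subseteq> B \<Longrightarrow> (x,y) \<in> (Rel ends B)\<^sup>*"
  by (meson Rel_mono rtrancl_mono subsetD)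

lemma path_prefix:
  assumes "is_path ends A u v es vs" "k \<le> length es"
  shows "is_path ends A u (vs ! k) (take k es) (take (Suc k) vs)"
proof -
  have lv: "length vs = Suc (length es)" using assms unfolding is_path_def by blast
  have tk: "take (Suc k) vs = take k vs @ [vs ! k]" using lv assms(2)
    by (simp add: take_Suc_conv_app_nth)
  have lt: "last (take (Suc k) vs) = vs ! k" by (simp add: tk)
  have ht: "hd (take (Suc k) vs) = hd vs" by simp
  show ?thesis using assms lv lt ht unfolding is_path_def
    by (auto simp: min_def dest: in_set_takeD)
qed

lemma path_extend:
  assumes P: "is_path ends A u v es vs" and e: "e \<in> A" "ends e = {v, w}"
  shows "\<exists>es' vs'. is_path ends A u w es' vs' \<and> length es' \<le> Suc (length es)"
proof (cases "w \<in> set vs")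
  case True
  then obtain k where k: "k < length vs" "vs ! k = w" by (auto simp: in_set_conv_nth)
  have "k \<le> length es" using k P unfolding is_path_def by simp
  from path_prefix[OF P this] k this show ?thesis by fastforce
next
  case False
  have lv: "length vs = Suc (length es)" and ends: "\<forall>k<length es. ends (es ! k) = {vs ! k, vs ! Suc k}"
    and lst: "last vs = v" and hd: "hd vs = u"
    using P unfolding is_path_def by blast+
  have ne: "e \<notin> set es"
  proof
    assume "e \<in> set es"
    then obtain m where m: "m < length es" "es ! m = e" by (auto simp: in_set_conv_nth)
    with ends e have "w \<in> {vs ! m, vs ! Suc m}" by auto
    with m lv have "w \<in> set vs" by auto
    with False show False by simp
  qed
  have lastv: "vs ! length es = v" using lst lv by (metis diff_Suc_1 last_conv_nth list.size(3) nat.distinct(1))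
  have vsne: "vs \<noteq> []" using lv by auto
  have "is_path ends A u w (es @ [e]) (vs @ [w])"
    unfolding is_path_def
  proof (intro conjI)
    show "\<forall>k<length (es @ [e]). ends ((es @ [e]) ! k) = {(vs @ [w]) ! k, (vs @ [w]) ! Suc k}"
    proof (intro allI impI)
      fix k assume "k < length (es @ [e])"
      then have "k < length es \<or> k = length es" by auto
      then show "ends ((es @ [e]) ! k) = {(vs @ [w]) ! k, (vs @ [w]) ! Suc k}"
      proof
        assume "k < length es" then show ?thesis using ends lv by (auto simp: nth_append)
      next
        assume "k = length es" then show ?thesis using e lastv lv by (auto simp: nth_append)
      qed
    qed
  qed (use P False ne vsne e hd lv in \<open>auto simp: is_path_def\<close>)
  then show ?thesis by fastforce
qed

lemma path_seg:
  assumes P: "is_path ends A u v es vs"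
  shows "n \<le> length es \<Longrightarrow> m \<le> n \<Longrightarrow> (vs!m, vs!n) \<in> (Rel ends {es!l | l. m \<le> l \<and> l < n})\<^sup>*"
proof (induction n)
  case 0 then show ?case by simp
next
  case (Suc n)
  show ?case
  proof (cases "m = Suc n")
    case True then show ?thesis by simp
  next
    case False
    then have mn: "m \<le> n" using Suc by simp
    have ih: "(vs!m, vs!n) \<in> (Rel ends {es!l | l. m \<le> l \<and> l < n})\<^sup>*"
      using Suc.IH Suc.prems mn by simp
    have sub: "{es!l | l. m \<le> l \<and> l < n} \<subseteq> {es!l | l. m \<le> l \<and> l < Suc n}" by auto
    have "(vs!m, vs!n) \<in> (Rel ends {es!l | l. m \<le> l \<and> l < Suc n})\<^sup>*"
      using rtr_mono[OF ih sub] .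
    moreover have "(vs!n, vs!Suc n) \<in> Rel ends {es!l | l. m \<le> l \<and> l < Suc n}"
      using P Suc.prems mn unfolding is_path_def by (intro RelI[of "es!n"]) auto
    ultimately show ?thesis by simp
  qed
qed

lemma path_ends:
  assumes "is_path ends A u v es vs"
  shows "vs ! 0 = u" "vs ! length es = v"
proof -
  have l: "length vs = Suc (length es)" "hd vs = u" "last vs = v"
    using assms unfolding is_path_def by blast+
  then have ne: "vs \<noteq> []" by auto
  show "vs ! 0 = u" using l(2) hd_conv_nth[OF ne] by simp
  show "vs ! length es = v" using l(3) l(1) last_conv_nth[OF ne] by simp
qed

lemma path_rtr:
  assumes P: "is_path ends A u v es vs"
  shows "(u, v) \<in> (Rel ends A)\<^sup>*"
proof -
  have sA: "set es \<subseteq> A" using P unfolding is_path_def by blast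
  have "{es!l | l. 0 \<le> l \<and> l < length es} \<subseteq> set es"
  proof
    fix x assume "x \<in> {es!l | l. 0 \<le> l \<and> l < length es}"
    then obtain l where "x = es!l" "l < length es" by blast
    then show "x \<in> set es" by simp
  qed
  then have sub: "{es!l | l. 0 \<le> l \<and> l < length es} \<subseteq> A" using sA by (rule order_trans)
  have sg: "(vs!0, vs!length es) \<in> (Rel ends {es!l | l. 0 \<le> l \<and> l < length es})\<^sup>*"
    using path_seg[OF P, of "length es" 0] by simp
  have "(vs!0, vs!length es) \<in> (Rel ends A)\<^sup>*" by (rule rtr_mono[OF sg sub])
  then show ?thesis using path_ends[OF P] by simp
qed

lemma reach_iff: "reach ends A u v \<longleftrightarrow> (u,v) \<in> (Rel ends A)\<^sup>*"
proof
  assume "reach ends A u v"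
  then obtain es vs where "is_path ends A u v es vs" unfolding reach_def by blast
  then show "(u,v) \<in> (Rel ends A)\<^sup>*" by (rule path_rtr)
next
  assume "(u,v) \<in> (Rel ends A)\<^sup>*"
  then show "reach ends A u v"
  proof (induction rule: rtrancl_induct)
    case base
    have "is_path ends A u u [] [u]" unfolding is_path_def by simp
    then show ?case unfolding reach_def by blast
  next
    case (step y z)
    then obtain es vs where "is_path ends A u y es vs" unfolding reach_def by blast
    moreover obtain e where "e \<in> A" "ends e = {y,z}" using step(2) unfolding Rel_def by blast
    ultimately show ?case unfolding reach_def using path_extend by metis
  qed
qed

lemma path_to_cycle:
  assumes P: "is_path ends A b a es vs" and ne: "e \<notin> set es" and ee: "ends e = {a,b}" and ab: "a \<noteq> b"
  shows "simple_cycle ends (insert e (set es)) (es @ [e])"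
proof -
  have lv: "length vs = Suc (length es)" and d: "distinct vs" "distinct es"
    and ends: "\<forall>k<length es. ends (es ! k) = {vs ! k, vs ! Suc k}"
    using P unfolding is_path_def by blast+
  have v0: "vs ! 0 = b" and vl: "vs ! length es = a" using path_ends[OF P] by auto
  have "es \<noteq> []" using v0 vl ab by auto
  then have len: "2 \<le> length (es @ [e])" by (cases es) auto
  have "\<forall>k<length (es @ [e]). ends ((es @ [e]) ! k) = {vs ! k, vs ! (Suc k mod length (es @ [e]))}"
  proof (intro allI impI)
    fix k assume "k < length (es @ [e])"
    then have "k < length es \<or> k = length es" by auto
    then show "ends ((es @ [e]) ! k) = {vs ! k, vs ! (Suc k mod length (es @ [e]))}"
    proof
      assume "k < length es" then show ?thesis using ends by (auto simp: nth_append)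
    next
      assume "k = length es" then show ?thesis using ee v0 vl by (auto simp: nth_append)
    qed
  qed
  then show ?thesis unfolding simple_cycle_def using len d ne lv by auto
qed

lemma cycle_mono: "simple_cycle ends A es \<Longrightarrow> set es \<subseteq> B \<Longrightarrow> simple_cycle ends B es"
  unfolding simple_cycle_def by blast

lemma mod_lemma: "k < n \<Longrightarrow> Suc m < n \<Longrightarrow> (Suc k + m) mod n \<noteq> k"
proof
  assume a: "k < n" "Suc m < n" "(Suc k + m) mod n = k"
  show False
  proof (cases "Suc k + m < n")
    case True then show False using a by simp
  next
    case False
    then have "(Suc k + m) mod n = Suc k + m - n" using a
      by (simp add: le_mod_geq less_imp_diff_less mod_less not_less)
    then show False using a by simp
  qed
qed

lemma cycle_split:
  assumes C: "simple_cycle ends A es" and e: "e \<in> set es"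
  shows "\<exists>a b. ends e = {a,b} \<and> (a,b) \<in> (Rel ends (set es - {e}))\<^sup>*"
proof -
  obtain vs where lv: "length vs = length es" and dv: "distinct vs"
    and ends: "\<forall>k<length es. ends (es ! k) = {vs ! k, vs ! (Suc k mod length es)}"
    and de: "distinct es" and l2: "2 \<le> length es"
    using C unfolding simple_cycle_def by blast
  define n where "n = length es"
  obtain k where k: "k < n" "es ! k = e" using e unfolding n_def by (auto simp: in_set_conv_nth)
  have claim: "m < n \<Longrightarrow> (vs!(Suc k mod n), vs!((Suc k + m) mod n)) \<in> (Rel ends (set es - {e}))\<^sup>*" for m
  proof (induction m)
    case 0 then show ?case by simp
  next
    case (Suc m)
    define j where "j = (Suc k + m) mod n"
    have jn: "j < n" using Suc.prems unfolding j_def by simp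
    have "j \<noteq> k" unfolding j_def using mod_lemma[OF k(1) Suc.prems] .
    then have "es ! j \<noteq> e" using k de jn unfolding n_def by (metis nth_eq_iff_index_eq)
    moreover have "es ! j \<in> set es" using jn unfolding n_def by simp
    moreover have "ends (es ! j) = {vs ! j, vs ! ((Suc k + Suc m) mod n)}"
      using ends jn unfolding n_def j_def by (simp add: mod_Suc_eq)
    ultimately have "(vs ! j, vs ! ((Suc k + Suc m) mod n)) \<in> Rel ends (set es - {e})"
      by (intro RelI) auto
    with Suc.IH Suc.prems show ?case unfolding j_def by simp
  qed
  have n1: "n - 1 < n" using l2 unfolding n_def by simp
  have "Suc k + (n - 1) = k + n" using l2 unfolding n_def by simp
  then have "(Suc k + (n - 1)) mod n = k" using k by simp
  then have "(vs!(Suc k mod n), vs!k) \<in> (Rel ends (set es - {e}))\<^sup>*" using claim[OF n1] by simp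
  moreover have "ends e = {vs!(Suc k mod n), vs!k}" using ends k unfolding n_def by auto
  ultimately show ?thesis by blast
qed

lemma exchange:
  assumes st: "spanning_tree ends V A S" and fA: "f \<in> A" "f \<notin> S"
    and ef: "ends f = {x,y}"
    and P: "is_path ends S x y es vs" and g: "g \<in> set es"
  shows "spanning_tree ends V A (insert f (S - {g}))"
proof -
  have SA: "S \<subseteq> A" and con: "connected_on ends V S" and ac: "edge_acyclic ends S"
    using st unfolding spanning_tree_def by blast+
  have lv: "length vs = Suc (length es)" and dvs: "distinct vs" and des: "distinct es"
    and sS: "set es \<subseteq> S" and endsP: "\<forall>k<length es. ends (es ! k) = {vs ! k, vs ! Suc k}"
    using P unfolding is_path_def by blast+
  obtain k where k: "k < length es" "es ! k = g" using g by (auto simp: in_set_conv_nth)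
  define a where "a = vs ! k"
  define b where "b = vs ! Suc k"
  have eg: "ends g = {a,b}" using endsP k unfolding a_def b_def by auto
  have ab: "a \<noteq> b" unfolding a_def b_def using dvs lv k by (simp add: nth_eq_iff_index_eq)
  define S1 where "S1 = S - {g}"
  have gS: "g \<in> S" using g sS by blast
  have sub1: "{es!l | l. 0 \<le> l \<and> l < k} \<subseteq> S1"
  proof
    fix z assume "z \<in> {es!l | l. 0 \<le> l \<and> l < k}"
    then obtain l where l: "z = es!l" "l < k" by blast
    have lk: "l \<noteq> k" "l < length es" using l k by auto
    have "es!l \<noteq> es!k" using nth_eq_iff_index_eq[OF des lk(2) k(1)] lk(1) by simp
    then have "z \<noteq> g" using l(1) k(2) by simp
    moreover have "z \<in> S" using l(1) lk(2) sS nth_mem by blast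
    ultimately show "z \<in> S1" unfolding S1_def by simp
  qed
  have sub2: "{es!l | l. Suc k \<le> l \<and> l < length es} \<subseteq> S1"
  proof
    fix z assume "z \<in> {es!l | l. Suc k \<le> l \<and> l < length es}"
    then obtain l where l: "z = es!l" "Suc k \<le> l" "l < length es" by blast
    have lk: "l \<noteq> k" using l by auto
    have "es!l \<noteq> es!k" using nth_eq_iff_index_eq[OF des l(3) k(1)] lk by simp
    then have "z \<noteq> g" using l(1) k(2) by simp
    moreover have "z \<in> S" using l(1) l(3) sS nth_mem by blast
    ultimately show "z \<in> S1" unfolding S1_def by simp
  qed
  have s1: "(vs!0, vs!k) \<in> (Rel ends {es!l | l. 0 \<le> l \<and> l < k})\<^sup>*"
    using path_seg[OF P, of k 0, OF less_imp_le[OF k(1)] le0] .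
  have s2: "(vs!Suc k, vs!length es) \<in> (Rel ends {es!l | l. Suc k \<le> l \<and> l < length es})\<^sup>*"
    using path_seg[OF P, of "length es" "Suc k", OF order_refl Suc_leI[OF k(1)]] .
  have xa: "(x, a) \<in> (Rel ends S1)\<^sup>*" using rtr_mono[OF s1 sub1] path_ends[OF P] unfolding a_def by simp
  have by': "(b, y) \<in> (Rel ends S1)\<^sup>*" using rtr_mono[OF s2 sub2] path_ends[OF P] unfolding b_def by simp
  define S' where "S' = insert f S1"
  have S1S': "S1 \<subseteq> S'" unfolding S'_def by blast
  have fxy: "(x,y) \<in> Rel ends S'" unfolding S'_def by (rule RelI[of f _ ends x y, OF _ ef]) simp
  have abS': "(a,b) \<in> (Rel ends S')\<^sup>*"
  proof -
    have "(a,x) \<in> (Rel ends S')\<^sup>*" using rtr_mono[OF rtr_sym[OF xa] S1S'] .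
    moreover have "(y,b) \<in> (Rel ends S')\<^sup>*" using rtr_mono[OF rtr_sym[OF by'] S1S'] .
    ultimately show ?thesis using fxy by (meson r_into_rtrancl rtrancl_trans)
  qed
  have RelS: "Rel ends S \<subseteq> (Rel ends S')\<^sup>*"
  proof
    fix pq assume "pq \<in> Rel ends S"
    then obtain p q h where pq: "pq = (p,q)" "h \<in> S" "ends h = {p,q}" unfolding Rel_def by blast
    show "pq \<in> (Rel ends S')\<^sup>*"
    proof (cases "h = g")
      case True
      then have "{p,q} = {a,b}" using eg pq by simp
      then have "(p = a \<and> q = b) \<or> (p = b \<and> q = a)" by (simp add: doubleton_eq_iff)
      then show ?thesis using abS' rtr_sym[OF abS'] pq by blast
    next
      case False
      then have "h \<in> S'" using pq unfolding S'_def S1_def by blast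
      then show ?thesis using RelI[of h S' ends p q] pq by blast
    qed
  qed
  have conn: "connected_on ends V S'"
    unfolding connected_on_def reach_iff
  proof (intro ballI)
    fix u v assume "u \<in> V" "v \<in> V"
    then have "(u,v) \<in> (Rel ends S)\<^sup>*" using con unfolding connected_on_def reach_iff by blast
    then show "(u,v) \<in> (Rel ends S')\<^sup>*" using rtrancl_subset_rtrancl[OF RelS] by blast
  qed
  have acyc: "edge_acyclic ends S'"
    unfolding edge_acyclic_def
  proof
    assume "\<exists>C. simple_cycle ends S' C"
    then obtain C where C: "simple_cycle ends S' C" by blast
    have CS': "set C \<subseteq> S'" using C unfolding simple_cycle_def by blast
    show False
    proof (cases "f \<in> set C")
      case False
      then have "set C \<subseteq> S" using CS' unfolding S'_def S1_def by blast
      then have "simple_cycle ends S C" by (rule cycle_mono[OF C])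
      then show False using ac unfolding edge_acyclic_def by blast
    next
      case True
      obtain a' b' where ab': "ends f = {a',b'}" "(a',b') \<in> (Rel ends (set C - {f}))\<^sup>*"
        using cycle_split[OF C True] by blast
      have "set C - {f} \<subseteq> S1" using CS' unfolding S'_def by blast
      then have ab'1: "(a',b') \<in> (Rel ends S1)\<^sup>*" using rtr_mono[OF ab'(2)] by blast
      have "{a',b'} = {x,y}" using ab'(1) ef by simp
      then have "(a' = x \<and> b' = y) \<or> (a' = y \<and> b' = x)" by (simp add: doubleton_eq_iff)
      then have xy1: "(x,y) \<in> (Rel ends S1)\<^sup>*" using ab'1 rtr_sym[OF ab'1] by blast
      have "(b,a) \<in> (Rel ends S1)\<^sup>*"
      proof -
        have "(y,x) \<in> (Rel ends S1)\<^sup>*" using rtr_sym[OF xy1] .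
        then show ?thesis using by' xa by (meson rtrancl_trans)
      qed
      then obtain es2 vs2 where P2: "is_path ends S1 b a es2 vs2"
        unfolding reach_iff[symmetric] reach_def by blast
      have "set es2 \<subseteq> S1" using P2 unfolding is_path_def by blast
      then have gn: "g \<notin> set es2" unfolding S1_def by blast
      have "simple_cycle ends (insert g (set es2)) (es2 @ [g])"
        by (rule path_to_cycle[OF P2 gn eg ab])
      moreover have "set (es2 @ [g]) \<subseteq> S" using \<open>set es2 \<subseteq> S1\<close> gS unfolding S1_def by auto
      ultimately have "simple_cycle ends S (es2 @ [g])" by (rule cycle_mono)
      then show False using ac unfolding edge_acyclic_def by blast
    qed
  qed
  have "S' \<subseteq> A" using SA fA unfolding S'_def S1_def by blast
  then show ?thesis using conn acyc unfolding spanning_tree_def S'_def S1_def by blast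
qed

lemma price_set_finite:
  assumes "finite A"
  shows "finite {red_max c R es | es. simple_cycle ends A es \<and> e \<in> set es}"
proof -
  have "{red_max c R es | es. simple_cycle ends A es \<and> e \<in> set es}
        \<subseteq> red_max c R ` {es. set es \<subseteq> A \<and> length es \<le> card A}"
  proof
    fix z assume "z \<in> {red_max c R es | es. simple_cycle ends A es \<and> e \<in> set es}"
    then obtain es where es: "z = red_max c R es" "simple_cycle ends A es" by blast
    then have s: "set es \<subseteq> A" "distinct es" unfolding simple_cycle_def by blast+
    then have "length es \<le> card A" using card_mono[OF assms s(1)] distinct_card[OF s(2)] by simp
    then show "z \<in> red_max c R ` {es. set es \<subseteq> A \<and> length es \<le> card A}" using es s by blast
  qed
  moreover have "finite (red_max c R ` {es. set es \<subseteq> A \<and> length es \<le> card A})"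
    using finite_lists_length_le[OF assms] by blast
  ultimately show ?thesis by (rule finite_subset)
qed

lemma price_le:
  assumes "finite (R \<union> F)" "simple_cycle ends (R \<union> F) es" "e \<in> set es"
  shows "price ends R c F e \<le> red_max c R es"
  unfolding price_def
  by (rule Min_le[OF price_set_finite[OF assms(1)]]) (use assms in blast)

lemma price_attained:
  assumes "finite (R \<union> F)" "simple_cycle ends (R \<union> F) es0" "e \<in> set es0"
  shows "\<exists>es. simple_cycle ends (R \<union> F) es \<and> e \<in> set es \<and> price ends R c F e = red_max c R es"
proof -
  have ne: "{red_max c R es | es. simple_cycle ends (R \<union> F) es \<and> e \<in> set es} \<noteq> {}"
    using assms by blast
  have "price ends R c F e \<in> {red_max c R es | es. simple_cycle ends (R \<union> F) es \<and> e \<in> set es}"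
    unfolding price_def by (rule Min_in[OF price_set_finite[OF assms(1)] ne])
  then show ?thesis by blast
qed

lemma red_max_nonneg:
  assumes "\<forall>e\<in>R \<inter> set es. 0 \<le> c e"
  shows "0 \<le> red_max c R es"
proof (cases "set es \<inter> R = {}")
  case True then show ?thesis unfolding red_max_def by simp
next
  case False
  then obtain e where e: "e \<in> set es \<inter> R" by blast
  have "c e \<le> Max (c ` (set es \<inter> R))" using e by (intro Max_ge) auto
  moreover have "0 \<le> c e" using assms e by blast
  ultimately show ?thesis unfolding red_max_def using False by simp
qed

lemma price_nonneg:
  assumes "finite (R \<union> F)" "simple_cycle ends (R \<union> F) es0" "e \<in> set es0"
    and "\<forall>e\<in>R. 0 \<le> c e"
  shows "0 \<le> price ends R c F e"
proof -
  obtain es where "price ends R c F e = red_max c R es"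
    using price_attained[OF assms(1-3)] by blast
  moreover have "0 \<le> red_max c R es" using assms(4) by (intro red_max_nonneg) blast
  ultimately show ?thesis by simp
qed

lemma mst_contains:
  assumes fin: "finite (R \<union> F)" and disj: "R \<inter> F = {}"
    and ex: "spanning_tree ends V (R \<union> F) S0"
    and acF: "edge_acyclic ends F"
    and endsF: "\<forall>e\<in>F. \<exists>x y. ends e = {x,y} \<and> x \<in> V \<and> y \<in> V \<and> x \<noteq> y"
  shows "\<exists>S. is_mst ends V R c F S \<and> F \<subseteq> S"
proof -
  define w where "w = follower_weight ends R c F"
  define ST where "ST = {S. spanning_tree ends V (R \<union> F) S}"
  have "ST \<subseteq> Pow (R \<union> F)" unfolding ST_def spanning_tree_def by blast
  then have finST: "finite ST" using fin by (meson finite_Pow_iff finite_subset)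
  have S0: "S0 \<in> ST" using ex unfolding ST_def by blast
  define m where "m = Min ((\<lambda>S. sum w S) ` ST)"
  define M where "M = {S \<in> ST. sum w S = m}"
  have "m \<in> (\<lambda>S. sum w S) ` ST" unfolding m_def using finST S0 by (intro Min_in) auto
  then have Mne: "M \<noteq> {}" unfolding M_def by force
  have finM: "finite M" using finST unfolding M_def by simp
  have minS: "\<forall>S\<in>ST. m \<le> sum w S" unfolding m_def using finST by auto
  define K where "K = Max ((\<lambda>S. card (S \<inter> F)) ` M)"
  have "K \<in> (\<lambda>S. card (S \<inter> F)) ` M" unfolding K_def using finM Mne by (intro Max_in) auto
  then obtain Ss where Ss: "Ss \<in> M" "card (Ss \<inter> F) = K" by blast
  have maxK: "\<forall>S\<in>M. card (S \<inter> F) \<le> K" unfolding K_def using finM by auto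
  have stS: "spanning_tree ends V (R \<union> F) Ss" and wSs: "sum w Ss = m"
    using Ss unfolding M_def ST_def by auto
  have mst: "is_mst ends V R c F Ss"
    unfolding is_mst_def using stS wSs minS unfolding ST_def w_def by auto
  have SsA: "Ss \<subseteq> R \<union> F" using stS unfolding spanning_tree_def by blast
  have finSs: "finite Ss" using finite_subset[OF SsA fin] .
  have "F \<subseteq> Ss"
  proof (rule ccontr)
    assume "\<not> F \<subseteq> Ss" then obtain f where f: "f \<in> F" "f \<notin> Ss" by blast
    obtain x y where xy: "ends f = {x,y}" "x\<in>V" "y\<in>V" "x\<noteq>y" using endsF f by blast
    have "reach ends Ss x y" using stS xy unfolding spanning_tree_def connected_on_def by blast
    then obtain es vs where P: "is_path ends Ss x y es vs" unfolding reach_def by blast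
    have esS: "set es \<subseteq> Ss" using P unfolding is_path_def by blast
    have fnot: "f \<notin> set es" using esS f by blast
    have efyx: "ends f = {y,x}" using xy(1) by (simp add: insert_commute)
    have cyc: "simple_cycle ends (insert f (set es)) (es @ [f])"
      by (rule path_to_cycle[OF P fnot efyx]) (use xy in simp)
    have "set (es @ [f]) \<subseteq> R \<union> F" using esS SsA f by auto
    then have cycA: "simple_cycle ends (R \<union> F) (es @ [f])" by (rule cycle_mono[OF cyc])
    have pf: "price ends R c F f \<le> red_max c R (es @ [f])"
      by (rule price_le[OF fin cycA]) simp
    have fR: "f \<notin> R" using disj f by blast
    have rs: "set (es @ [f]) \<inter> R = set es \<inter> R" using fR by auto
    show False
    proof (cases "set es \<inter> R = {}")
      case True
      then have "set (es @ [f]) \<subseteq> F" using esS SsA f by auto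
      then have "simple_cycle ends F (es @ [f])" by (rule cycle_mono[OF cyc])
      then show False using acF unfolding edge_acyclic_def by blast
    next
      case False
      have "Max (c ` (set es \<inter> R)) \<in> c ` (set es \<inter> R)" using False by (intro Max_in) auto
      then obtain g where g: "g \<in> set es" "g \<in> R" "c g = Max (c ` (set es \<inter> R))" by auto
      have rm: "red_max c R (es @ [f]) = c g" unfolding red_max_def using rs False g by simp
      define S' where "S' = insert f (Ss - {g})"
      have fA: "f \<in> R \<union> F" using f by blast
      have stS': "spanning_tree ends V (R \<union> F) S'"
        unfolding S'_def by (rule exchange[OF stS fA f(2) xy(1) P g(1)])
      have gS: "g \<in> Ss" using g esS by blast
      have "sum w S' = w f + sum w (Ss - {g})" unfolding S'_def using finSs f(2)
        by (subst sum.insert) auto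
      also have "sum w (Ss - {g}) = sum w Ss - w g" using sum_diff1[of Ss w g] gS finSs by simp
      finally have wS': "sum w S' = sum w Ss - w g + w f" by simp
      have wg: "w g = c g" unfolding w_def follower_weight_def using g by simp
      have wf: "w f = price ends R c F f" unfolding w_def follower_weight_def using fR by simp
      have "sum w S' \<le> m" using wS' wg wf pf rm wSs by simp
      moreover have "S' \<in> ST" using stS' unfolding ST_def by blast
      ultimately have "S' \<in> M" using minS unfolding M_def by force
      then have le: "card (S' \<inter> F) \<le> K" using maxK by blast
      have gF: "g \<notin> F" using disj g by blast
      have "S' \<inter> F = insert f (Ss \<inter> F)" unfolding S'_def using gF f by blast
      then have "card (S' \<inter> F) = Suc (card (Ss \<inter> F))" using finSs f(2) by simp
      then show False using le Ss(2) by simp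
    qed
  qed
  then show ?thesis using mst by blast
qed

locale tctx =
  fixes V :: "'v set" and ET :: "'v set set" and v0 :: 'v
  assumes tree: "is_tree V ET" and v0V: "v0 \<in> V"
begin

abbreviation d :: "'v \<Rightarrow> nat" where "d \<equiv> tdist ET v0"

lemma ETe: "e \<in> ET \<Longrightarrow> \<exists>x y. x \<in> V \<and> y \<in> V \<and> x \<noteq> y \<and> e = {x,y}"
  using tree unfolding is_tree_def by blast

lemma ET_pair: "{a,b} \<in> ET \<Longrightarrow> a \<in> V \<and> b \<in> V \<and> a \<noteq> b"
proof -
  assume "{a,b} \<in> ET"
  then obtain x y where "x \<in> V" "y \<in> V" "x \<noteq> y" "{a,b} = {x,y}" using ETe by blast
  then show ?thesis by (auto simp: doubleton_eq_iff)
qed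

lemma finV: "finite V" using tree unfolding is_tree_def by blast

lemma finET: "finite ET"
proof -
  have "ET \<subseteq> Pow V" using ETe by blast
  then show ?thesis using finV by (meson finite_Pow_iff finite_subset)
qed

lemma conn: "u \<in> V \<Longrightarrow> v \<in> V \<Longrightarrow> (u,v) \<in> (Rel id ET)\<^sup>*"
  using tree unfolding is_tree_def spanning_tree_def connected_on_def reach_iff by blast

lemma acyc: "edge_acyclic id ET"
  using tree unfolding is_tree_def spanning_tree_def by blast

lemma no_cycle:
  assumes e: "{a,b} \<in> ET" and ab: "a \<noteq> b" and r: "(a,b) \<in> (Rel id (ET - {{a,b}}))\<^sup>*"
  shows False
proof -
  obtain es vs where P: "is_path id (ET - {{a,b}}) b a es vs"
    using rtr_sym[OF r] unfolding reach_iff[symmetric] reach_def by blast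
  have s: "set es \<subseteq> ET - {{a,b}}" using P unfolding is_path_def by blast
  then have n: "{a,b} \<notin> set es" by blast
  have "simple_cycle id (insert {a,b} (set es)) (es @ [{a,b}])"
    by (rule path_to_cycle[OF P n _ ab]) simp
  moreover have "set (es @ [{a,b}]) \<subseteq> ET" using s e by auto
  ultimately have "simple_cycle id ET (es @ [{a,b}])" by (rule cycle_mono)
  then show False using acyc unfolding edge_acyclic_def by blast
qed

lemma dist_path: "v \<in> V \<Longrightarrow> \<exists>es vs. is_path id ET v0 v es vs \<and> length es = d v"
proof -
  assume v: "v \<in> V"
  then obtain es vs where "is_path id ET v0 v es vs"
    using conn[OF v0V v] unfolding reach_iff[symmetric] reach_def by blast
  then have ex: "\<exists>n es vs. is_path id ET v0 v es vs \<and> length es = n" by blast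
  show ?thesis unfolding tdist_def by (rule LeastI_ex[OF ex])
qed

lemma d_le: "is_path id ET v0 v es vs \<Longrightarrow> d v \<le> length es"
  unfolding tdist_def by (rule Least_le) blast

lemma D2: assumes e: "{a,b} \<in> ET" shows "d b \<le> Suc (d a)"
proof -
  have aV: "a \<in> V" using ET_pair[OF e] by blast
  obtain es vs where P: "is_path id ET v0 a es vs" "length es = d a" using dist_path[OF aV] by blast
  obtain es' vs' where "is_path id ET v0 b es' vs'" "length es' \<le> Suc (length es)"
    using path_extend[OF P(1) e, of b] by auto
  then show ?thesis using d_le P(2) by fastforce
qed

lemma D1: "d v0 = 0"
proof -
  have "is_path id ET v0 v0 [] [v0]" unfolding is_path_def by simp
  then show ?thesis using d_le by fastforce
qed

lemma D1': assumes "v \<in> V" "d v = 0" shows "v = v0"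
proof -
  obtain es vs where P: "is_path id ET v0 v es vs" "length es = d v" using dist_path[OF assms(1)] by blast
  then have "length es = 0" using assms by simp
  then show ?thesis using path_ends[OF P(1)] by simp
qed

lemma D3:
  assumes v: "v \<in> V" and dv: "d v = Suc n"
  shows "\<exists>u. {u,v} \<in> ET \<and> d u = n"
proof -
  obtain es vs where P: "is_path id ET v0 v es vs" "length es = d v" using dist_path[OF v] by blast
  have n: "n < length es" "n \<le> length es" using P(2) dv by auto
  have "is_path id ET v0 (vs ! n) (take n es) (take (Suc n) vs)" by (rule path_prefix[OF P(1) n(2)])
  then have du: "d (vs ! n) \<le> n" using d_le n by fastforce
  have eE: "es ! n \<in> ET" using P(1) n unfolding is_path_def by (meson nth_mem subsetD)
  have "id (es ! n) = {vs ! n, vs ! Suc n}" using P(1) n unfolding is_path_def by blast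
  moreover have "vs ! Suc n = v" using path_ends(2)[OF P(1)] P(2) dv by simp
  ultimately have e: "{vs ! n, v} \<in> ET" using eE by simp
  have "d v \<le> Suc (d (vs ! n))" by (rule D2[OF e])
  then have "d (vs ! n) = n" using du dv by simp
  then show ?thesis using e by blast
qed

definition Dn :: "('v \<times> 'v) set" where
  "Dn = {(x,y). {x,y} \<in> ET \<and> Suc (d y) = d x}"

lemma chain: "v \<in> V \<Longrightarrow> (v, v0) \<in> Dn\<^sup>*"
proof (induction "d v" arbitrary: v)
  case 0
  then have "v = v0" using D1' by metis
  then show ?case by simp
next
  case (Suc n)
  obtain u where u: "{u,v} \<in> ET" "d u = n" using D3[OF Suc.prems] Suc.hyps(2)[symmetric] by blast
  have uV: "u \<in> V" using ET_pair[OF u(1)] by blast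
  have "(u, v0) \<in> Dn\<^sup>*" using Suc.hyps(1)[OF u(2)[symmetric] uV] .
  moreover have "(v,u) \<in> Dn" unfolding Dn_def using u Suc.hyps(2) by (simp add: insert_commute)
  ultimately show ?case by (meson converse_rtrancl_into_rtrancl)
qed

lemma chain_in:
  assumes "(x,y) \<in> Dn\<^sup>*"
  shows "d y \<le> d x \<and> (x,y) \<in> (Rel id {e\<in>ET. \<forall>z\<in>e. d z \<le> d x})\<^sup>*"
  using assms
proof (induction rule: rtrancl_induct)
  case base then show ?case by simp
next
  case (step y z)
  have e: "{y,z} \<in> ET" "Suc (d z) = d y" using step(2) unfolding Dn_def by simp_all
  have dy: "d y \<le> d x" using step(3) by simp
  have mem: "{y,z} \<in> {e\<in>ET. \<forall>z\<in>e. d z \<le> d x}" using e dy by simp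
  have r: "(y,z) \<in> Rel id {e\<in>ET. \<forall>z\<in>e. d z \<le> d x}" by (rule RelI[of "{y,z}" _ id y z, OF mem]) simp
  have "(x,z) \<in> (Rel id {e\<in>ET. \<forall>z\<in>e. d z \<le> d x})\<^sup>*"
    using step(3) r by (meson rtrancl.rtrancl_into_rtrancl)
  moreover have "d z \<le> d x" using dy e(2) by simp
  ultimately show ?case by (rule conjI[rotated])
qed

lemma Dn_Rel: "Dn \<subseteq> Rel id {e\<in>ET. \<exists>x y. e = {x,y} \<and> Suc (d y) = d x}"
proof
  fix p assume "p \<in> Dn"
  then obtain x y where p: "p = (x,y)" "{x,y} \<in> ET" "Suc (d y) = d x" unfolding Dn_def by blast
  have "{x,y} \<in> {e\<in>ET. \<exists>x y. e = {x,y} \<and> Suc (d y) = d x}" using p by blast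
  then have "(x,y) \<in> Rel id {e\<in>ET. \<exists>x y. e = {x,y} \<and> Suc (d y) = d x}"
    by (rule RelI) simp
  then show "p \<in> Rel id {e\<in>ET. \<exists>x y. e = {x,y} \<and> Suc (d y) = d x}" using p by simp
qed

lemma U1: assumes e: "{a,b} \<in> ET" shows "d a \<noteq> d b"
proof
  assume eq: "d a = d b"
  have ab: "a \<in> V" "b \<in> V" "a \<noteq> b" using ET_pair[OF e] by auto
  define A1 where "A1 = {e\<in>ET. \<exists>x y. e = {x,y} \<and> Suc (d y) = d x}"
  have "{a,b} \<notin> A1"
  proof
    assume "{a,b} \<in> A1"
    then obtain x y where xy: "{a,b} = {x,y}" "Suc (d y) = d x" unfolding A1_def by blast
    have "x \<in> {x,y}" "y \<in> {x,y}" by simp_all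
    then have "x \<in> {a,b}" "y \<in> {a,b}" using xy(1) by simp_all
    then have "d x = d a" "d y = d a" using eq by auto
    then show False using xy(2) by simp
  qed
  then have sub: "A1 \<subseteq> ET - {{a,b}}" unfolding A1_def by blast
  have DA: "Dn\<^sup>* \<subseteq> (Rel id A1)\<^sup>*" unfolding A1_def by (rule rtrancl_mono[OF Dn_Rel])
  have "(a,v0) \<in> (Rel id A1)\<^sup>*" using DA chain[OF ab(1)] by blast
  then have 1: "(a,v0) \<in> (Rel id (ET - {{a,b}}))\<^sup>*" by (rule rtr_mono[OF _ sub])
  have "(b,v0) \<in> (Rel id A1)\<^sup>*" using DA chain[OF ab(2)] by blast
  then have 2: "(b,v0) \<in> (Rel id (ET - {{a,b}}))\<^sup>*" by (rule rtr_mono[OF _ sub])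
  have "(a,b) \<in> (Rel id (ET - {{a,b}}))\<^sup>*" using 1 rtr_sym[OF 2] by (rule rtrancl_trans)
  then show False by (rule no_cycle[OF e ab(3)])
qed

lemma U2:
  assumes e1: "{u,v} \<in> ET" and e2: "{u',v} \<in> ET" and d1: "Suc (d u) = d v" and d2: "Suc (d u') = d v"
  shows "u = u'"
proof (rule ccontr)
  assume uu: "u \<noteq> u'"
  have uV: "u \<in> V" "u \<noteq> v" using ET_pair[OF e1] by auto
  have u'V: "u' \<in> V" "u' \<noteq> v" using ET_pair[OF e2] by auto
  define A2 where "A2 = {e\<in>ET. \<forall>z\<in>e. d z \<le> d u}"
  have "{u,v} \<notin> A2" unfolding A2_def using d1 by auto
  then have sub: "A2 \<subseteq> ET - {{u,v}}" unfolding A2_def by blast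
  have "(u,v0) \<in> (Rel id A2)\<^sup>*" using chain_in[OF chain[OF uV(1)]] unfolding A2_def by blast
  then have 1: "(u,v0) \<in> (Rel id (ET - {{u,v}}))\<^sup>*" by (rule rtr_mono[OF _ sub])
  have duu: "d u' = d u" using d1 d2 by simp
  have "(u',v0) \<in> (Rel id {e\<in>ET. \<forall>z\<in>e. d z \<le> d u'})\<^sup>*" using chain_in[OF chain[OF u'V(1)]] by blast
  then have "(u',v0) \<in> (Rel id A2)\<^sup>*" unfolding A2_def duu .
  then have 2: "(u',v0) \<in> (Rel id (ET - {{u,v}}))\<^sup>*" by (rule rtr_mono[OF _ sub])
  have "{u',v} \<noteq> {u,v}" using uu u'V by (simp add: doubleton_eq_iff)
  moreover have "{v,u'} = {u',v}" by (rule insert_commute)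
  ultimately have "{v,u'} \<in> ET - {{u,v}}" using e2 by simp
  then have 3: "(v,u') \<in> Rel id (ET - {{u,v}})" by (rule RelI) simp
  have "(u',u) \<in> (Rel id (ET - {{u,v}}))\<^sup>*" using 2 rtr_sym[OF 1] by (rule rtrancl_trans)
  then have "(v,u) \<in> (Rel id (ET - {{u,v}}))\<^sup>*" using 3 by (rule converse_rtrancl_into_rtrancl[rotated])
  then have "(u,v) \<in> (Rel id (ET - {{u,v}}))\<^sup>*" by (rule rtr_sym)
  then show False by (rule no_cycle[OF e1 uV(2)])
qed

lemma par:
  assumes v: "v \<in> V" "v \<noteq> v0"
  shows "{parent ET v0 v, v} \<in> ET \<and> Suc (d (parent ET v0 v)) = d v"
proof -
  have "d v \<noteq> 0" using D1' v by blast
  then obtain n where n: "d v = Suc n" using not0_implies_Suc by blast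
  obtain u where u: "{u,v} \<in> ET" "d u = n" using D3[OF v(1) n] by blast
  have ex: "\<exists>!u. {u,v} \<in> ET \<and> Suc (d u) = d v"
  proof (rule ex1I[of _ u])
    show "{u,v} \<in> ET \<and> Suc (d u) = d v" using u n by simp
  next
    fix y assume y: "{y,v} \<in> ET \<and> Suc (d y) = d v"
    show "y = u" using U2[of y v u] y u n by simp
  qed
  show ?thesis unfolding parent_def by (rule theI'[OF ex])
qed

lemma parV: "v \<in> V \<Longrightarrow> v \<noteq> v0 \<Longrightarrow> parent ET v0 v \<in> V"
  using par ET_pair by blast

lemma par_unique:
  assumes "{u,v} \<in> ET" "Suc (d u) = d v" shows "parent ET v0 v = u"
proof -
  have v: "v \<in> V" using ET_pair assms(1) by blast
  have "v \<noteq> v0" using assms(2) D1 by auto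
  then show ?thesis using par[OF v] U2 assms by blast
qed

lemma classify:
  assumes e: "{a,b} \<in> ET"
  shows "(a = parent ET v0 b \<and> Suc (d a) = d b) \<or> (b = parent ET v0 a \<and> Suc (d b) = d a)"
proof -
  have 1: "d b \<le> Suc (d a)" by (rule D2[OF e])
  have e': "{b,a} \<in> ET" using e by (simp add: insert_commute)
  have 2: "d a \<le> Suc (d b)" by (rule D2[OF e'])
  have 3: "d a \<noteq> d b" by (rule U1[OF e])
  show ?thesis
  proof (cases "d a < d b")
    case True
    then have "Suc (d a) = d b" using 1 by simp
    then show ?thesis using par_unique[OF e] by simp
  next
    case False
    then have "Suc (d b) = d a" using 2 3 by simp
    then show ?thesis using par_unique[OF e'] by simp
  qed
qed

end

locale tctx2 = tctx +
  fixes i :: nat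
  assumes i1: "1 \<le> i"
begin

abbreviation pa where "pa \<equiv> parent ET v0"
abbreviation E where "E \<equiv> level_edges V ET v0 i"
abbreviation SV where "SV \<equiv> star_vertices V ET v0 i"
abbreviation L where "L \<equiv> level V ET v0 i"

definition anc where "anc x = (pa ^^ (d x - i)) x"
definition kap where "kap x = (if d x < i then v0 else anc x)"

lemma v0_ne: "v \<in> V \<Longrightarrow> 1 \<le> d v \<Longrightarrow> v \<noteq> v0"
  using D1 by auto

lemma iter: "x \<in> V \<Longrightarrow> n \<le> d x \<Longrightarrow> (pa ^^ n) x \<in> V \<and> d ((pa ^^ n) x) = d x - n"
proof (induction n)
  case 0 then show ?case by simp
next
  case (Suc n)
  define y where "y = (pa ^^ n) x"
  have y: "y \<in> V" "d y = d x - n" using Suc unfolding y_def by auto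
  have "y \<noteq> v0" using y Suc.prems v0_ne[of y] by simp
  then have "pa y \<in> V" "Suc (d (pa y)) = d y" using par[OF y(1)] parV[OF y(1)] by auto
  moreover have "(pa ^^ Suc n) x = pa y" unfolding y_def by simp
  ultimately show ?case using y by simp
qed

lemma L_iff: "v \<in> L \<longleftrightarrow> v \<in> V \<and> d v = i"
  unfolding level_def by simp

lemma SV_iff: "j \<in> SV \<longleftrightarrow> j = v0 \<or> (j \<in> V \<and> d j = i)"
  by (simp add: star_vertices_def L_iff)

lemma SV_V: "j \<in> SV \<Longrightarrow> j \<in> V"
proof -
  assume "j \<in> SV"
  then have "j = v0 \<or> (j \<in> V \<and> d j = i)" by (simp only: SV_iff)
  then show ?thesis using v0V by blast
qed

lemma kap_SV: assumes x: "x \<in> V" shows "kap x \<in> SV"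
proof (cases "d x < i")
  case True then show ?thesis unfolding kap_def SV_iff by simp
next
  case False
  then have "d x - i \<le> d x" by simp
  from iter[OF x this] False show ?thesis unfolding kap_def anc_def SV_iff by simp
qed

lemma kap_fix: assumes j: "j \<in> SV" shows "kap j = j"
proof (cases "j = v0")
  case True then show ?thesis unfolding kap_def using D1 i1 by simp
next
  case False
  then have "d j = i" using j SV_iff by blast
  then show ?thesis unfolding kap_def anc_def by simp
qed

lemma E_mem: "w \<in> L \<Longrightarrow> {pa w, w} \<in> E"
  unfolding level_edges_def by blast

lemma E_elem: "e \<in> E \<Longrightarrow> \<exists>v. v \<in> V \<and> d v = i \<and> v \<in> e \<and> e = {pa v, v}"
proof -
  assume "e \<in> E"
  then obtain v where v: "v \<in> L" "e = {pa v, v}" unfolding level_edges_def by blast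
  then have "v \<in> V \<and> d v = i \<and> v \<in> e \<and> e = {pa v, v}" using L_iff by simp
  then show ?thesis by blast
qed

lemma E_sub: "E \<subseteq> ET"
proof
  fix e assume "e \<in> E"
  then obtain v where v: "v \<in> V" "d v = i" "e = {pa v, v}" using E_elem by blast
  then have "v \<noteq> v0" using v0_ne i1 by simp
  then show "e \<in> ET" using par[OF v(1)] v by simp
qed

lemma Ei_char:
  assumes w: "w \<in> V" "w \<noteq> v0" and e: "{pa w, w} \<in> E"
  shows "d w = i"
proof -
  obtain v where v: "v \<in> V" "d v = i" "{pa w, w} = {pa v, v}" using E_elem[OF e] by metis
  have vv: "v \<noteq> v0" using v0_ne i1 v by simp
  have "(pa w = pa v \<and> w = v) \<or> (pa w = v \<and> w = pa v)" using v(3) by (simp add: doubleton_eq_iff)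
  then show ?thesis
  proof
    assume "pa w = pa v \<and> w = v" then show ?thesis using v by simp
  next
    assume h: "pa w = v \<and> w = pa v"
    have a1: "Suc (d (pa v)) = d v" using par[OF v(1) vv] by simp
    have a2: "Suc (d (pa w)) = d w" using par[OF w] by simp
    have "Suc (d v) = d (pa v)" using a2 h by metis
    then show ?thesis using a1 by simp
  qed
qed

lemma kap_edge:
  assumes w: "w \<in> V" "w \<noteq> v0" and dw: "d w \<noteq> i"
  shows "kap (pa w) = kap w"
proof -
  have dp: "Suc (d (pa w)) = d w" using par[OF w] by simp
  show ?thesis
  proof (cases "d w < i")
    case True
    then have "d (pa w) < i" using dp by simp
    then show ?thesis using True unfolding kap_def by simp
  next
    case False
    then have gt: "i < d w" using dw by simp
    then have nlt: "\<not> d (pa w) < i" using dp by simp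
    have eq: "d w - i = Suc (d (pa w) - i)" using gt dp by simp
    have "(pa ^^ (d w - i)) w = (pa ^^ (d (pa w) - i)) (pa w)"
      unfolding eq funpow_Suc_right by simp
    then show ?thesis unfolding kap_def anc_def using nlt False by simp
  qed
qed

lemma kap_Rel:
  assumes r: "(y,z) \<in> Rel id (ET - E)"
  shows "kap y = kap z"
proof -
  obtain e where e: "e \<in> ET - E" "id e = {y,z}" using r unfolding Rel_def by blast
  then have eyz: "{y,z} \<in> ET" "{y,z} \<notin> E" by auto
  have c: "(y = pa z \<and> Suc (d y) = d z) \<or> (z = pa y \<and> Suc (d z) = d y)" by (rule classify[OF eyz(1)])
  show ?thesis
  proof (cases "y = pa z \<and> Suc (d y) = d z")
    case True
    have zV: "z \<in> V" using ET_pair[OF eyz(1)] by blast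
    have zn: "z \<noteq> v0" using True D1 by auto
    have "d z \<noteq> i"
    proof
      assume "d z = i"
      then have "{pa z, z} \<in> E" using E_mem zV L_iff by blast
      then show False using eyz(2) True by simp
    qed
    then show ?thesis using kap_edge[OF zV zn] True by simp
  next
    case False
    then have h: "z = pa y \<and> Suc (d z) = d y" using c by blast
    have eyz': "{z,y} \<in> ET" "{z,y} \<notin> E" using eyz by (simp_all add: insert_commute)
    have yV: "y \<in> V" using ET_pair[OF eyz(1)] by blast
    have yn: "y \<noteq> v0" using h D1 by auto
    have "d y \<noteq> i"
    proof
      assume "d y = i"
      then have "{pa y, y} \<in> E" using E_mem yV L_iff by blast
      then show False using eyz'(2) h by simp
    qed
    then show ?thesis using kap_edge[OF yV yn] h by simp
  qed
qed

lemma kap_rtr: "(y,z) \<in> (Rel id (ET - E))\<^sup>* \<Longrightarrow> kap y = kap z"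
proof (induction rule: rtrancl_induct)
  case base then show ?case by simp
next
  case (step z w) then show ?case using kap_Rel by simp
qed

lemma upn: "x \<in> V \<Longrightarrow> d x = i + n \<Longrightarrow> (x, anc x) \<in> (Rel id (ET - E))\<^sup>*"
proof (induction n arbitrary: x)
  case 0 then show ?case unfolding anc_def by simp
next
  case (Suc n)
  have xn: "x \<noteq> v0" using Suc.prems v0_ne by simp
  define p where "p = pa x"
  have p: "p \<in> V" "Suc (d p) = d x" "{p, x} \<in> ET" using par[OF Suc.prems(1) xn] parV[OF Suc.prems(1) xn]
    unfolding p_def by auto
  have dp: "d p = i + n" using p Suc.prems by simp
  have "d x - i = Suc (d p - i)" using dp Suc.prems by simp
  then have anc_eq: "anc x = anc p" unfolding anc_def p_def by (simp add: funpow_swap1)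
  have "d x \<noteq> i" using Suc.prems by simp
  then have "{p, x} \<notin> E" using Ei_char[OF Suc.prems(1) xn] unfolding p_def by blast
  then have "{x,p} \<in> ET - E" using p(3) by (simp add: insert_commute)
  then have "(x,p) \<in> Rel id (ET - E)" by (rule RelI) simp
  moreover have "(p, anc p) \<in> (Rel id (ET - E))\<^sup>*" using Suc.IH[OF p(1) dp] .
  ultimately show ?case unfolding anc_eq by (rule converse_rtrancl_into_rtrancl)
qed

lemma up: assumes x: "x \<in> V" shows "(x, kap x) \<in> (Rel id (ET - E))\<^sup>*"
proof (cases "d x < i")
  case True
  have "(x,v0) \<in> (Rel id {e\<in>ET. \<forall>z\<in>e. d z \<le> d x})\<^sup>*" using chain_in[OF chain[OF x]] by blast
  moreover have "{e\<in>ET. \<forall>z\<in>e. d z \<le> d x} \<subseteq> ET - E"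
  proof
    fix e assume e: "e \<in> {e\<in>ET. \<forall>z\<in>e. d z \<le> d x}"
    have "e \<notin> E"
    proof
      assume "e \<in> E"
      then obtain v where "d v = i" "v \<in> e" using E_elem by blast
      then show False using e True by auto
    qed
    then show "e \<in> ET - E" using e by blast
  qed
  ultimately have "(x,v0) \<in> (Rel id (ET - E))\<^sup>*" by (rule rtr_mono)
  then show ?thesis unfolding kap_def using True by simp
next
  case False
  then obtain n where "d x = i + n" by (metis le_add_diff_inverse not_less)
  then show ?thesis using upn[OF x] False unfolding kap_def by simp
qed

lemma comp_char:
  assumes j: "j \<in> SV"
  shows "comp V ET v0 i j = {x\<in>V. kap x = j}"
proof
  show "comp V ET v0 i j \<subseteq> {x\<in>V. kap x = j}"
  proof
    fix x assume "x \<in> comp V ET v0 i j"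
    then have x: "x \<in> V" "(j,x) \<in> (Rel id (ET - E))\<^sup>*" unfolding comp_def reach_iff by auto
    then have "kap x = kap j" using kap_rtr by simp
    then show "x \<in> {x\<in>V. kap x = j}" using x kap_fix[OF j] by simp
  qed
next
  show "{x\<in>V. kap x = j} \<subseteq> comp V ET v0 i j"
  proof
    fix x assume x: "x \<in> {x\<in>V. kap x = j}"
    then have "(x, j) \<in> (Rel id (ET - E))\<^sup>*" using up by auto
    then have "(j, x) \<in> (Rel id (ET - E))\<^sup>*" by (rule rtr_sym)
    then show "x \<in> comp V ET v0 i j" using x unfolding comp_def reach_iff by simp
  qed
qed

lemma cand_props:
  assumes p: "p \<in> aux_pairs V ET v0 i" and e: "e \<in> cand V ET v0 i p"
  shows "\<exists>x y. e = {x,y} \<and> x \<in> V \<and> y \<in> V \<and> x \<noteq> y \<and> p = {kap x, kap y} \<and> e \<notin> ET"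
proof -
  obtain j' q' where p1: "p = {j',q'}" "j' \<in> SV" "q' \<in> SV" "j' \<noteq> q'"
    using p unfolding aux_pairs_def by blast
  obtain x y j q where c: "e = {x,y}" "p = {j,q}" "x \<in> comp V ET v0 i j" "y \<in> comp V ET v0 i q" "{x,y} \<notin> ET"
    using e unfolding cand_def by blast
  have "j \<in> {j,q}" "q \<in> {j,q}" by simp_all
  then have "j \<in> {j',q'}" "q \<in> {j',q'}" using c(2) p1(1) by simp_all
  then have jq: "j \<in> SV" "q \<in> SV" using p1 by auto
  have x: "x \<in> V" "kap x = j" using c(3) comp_char[OF jq(1)] by auto
  have y: "y \<in> V" "kap y = q" using c(4) comp_char[OF jq(2)] by auto
  have "j \<noteq> q"
  proof
    assume "j = q"
    then have "{j',q'} = {j}" using c(2) p1(1) by simp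
    then show False using p1(4) by (simp add: doubleton_eq_iff)
  qed
  then have "x \<noteq> y" using x y by auto
  then show ?thesis using c x y by blast
qed

end

locale tctx3 = tctx2 +
  fixes hatP :: "'a set set" and ech :: "'a set \<Rightarrow> 'a set" and c :: "'a set \<Rightarrow> real"
  assumes hsub: "hatP \<subseteq> aux_pairs V ET v0 i"
    and ech_in: "\<forall>p\<in>aux_pairs V ET v0 i. ech p \<in> cand V ET v0 i p"
    and acyc_aux: "edge_acyclic (aux_ends v0) (Inr ` hatP)"
    and cnn: "\<forall>e\<in>ET. 0 \<le> c e"
begin

abbreviation F where "F \<equiv> ech ` hatP"
abbreviation AE where "AE \<equiv> aux_ends v0"
abbreviation AA where "AA \<equiv> Inl ` L \<union> Inr ` hatP"

lemma AE_Inl: "AE (Inl w) = {v0, w}" unfolding aux_ends_def by simp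
lemma AE_Inr: "AE (Inr p) = p" unfolding aux_ends_def by simp
lemma AC_Inl: "aux_cost ET v0 c (Inl w) = c {pa w, w}" unfolding aux_cost_def by simp

lemma pair_props:
  assumes p: "p \<in> aux_pairs V ET v0 i"
  shows "\<exists>j q. p = {j,q} \<and> j \<in> SV \<and> q \<in> SV \<and> j \<noteq> q"
  using p unfolding aux_pairs_def by blast

lemma kE:
  assumes p: "p \<in> hatP"
  shows "\<exists>x y. ech p = {x,y} \<and> x \<in> V \<and> y \<in> V \<and> x \<noteq> y \<and> p = {kap x, kap y} \<and> ech p \<notin> ET"
proof -
  have pp: "p \<in> aux_pairs V ET v0 i" using p hsub by blast
  show ?thesis by (rule cand_props[OF pp]) (use ech_in pp in blast)
qed

lemma kap_img: "p \<in> hatP \<Longrightarrow> kap ` (ech p) = p"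
proof -
  assume p: "p \<in> hatP"
  obtain x y where "ech p = {x,y}" "p = {kap x, kap y}" using kE[OF p] by blast
  then show ?thesis by simp
qed

lemma inj_ech: "inj_on ech hatP"
proof (rule inj_onI)
  fix p q assume "p \<in> hatP" "q \<in> hatP" "ech p = ech q"
  then show "p = q" using kap_img by metis
qed

lemma F_ET: "F \<inter> ET = {}"
  using kE by blast

lemma fin_hatP: "finite hatP"
proof -
  have "aux_pairs V ET v0 i \<subseteq> Pow V" unfolding aux_pairs_def using SV_V by blast
  then show ?thesis using hsub finV by (meson finite_Pow_iff finite_subset)
qed

lemma fin_L: "finite L"
proof -
  have "L \<subseteq> V" unfolding level_def by blast
  then show ?thesis using finV finite_subset by blast
qed

lemma fin_orig: "finite (ET \<union> F)" using finET fin_hatP by simp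
lemma fin_aux: "finite AA" using fin_L fin_hatP by simp

lemma L_notv0: "w \<in> L \<Longrightarrow> w \<noteq> v0"
  using L_iff v0_ne i1 by simp

lemma L_par: "w \<in> L \<Longrightarrow> {pa w, w} \<in> ET"
  using L_iff L_notv0 par by blast

definition Bm :: "'a set set \<Rightarrow> ('a + 'a set) set" where
  "Bm B = Inl ` {w\<in>L. {pa w, w} \<in> B} \<union> Inr ` {p\<in>hatP. ech p \<in> B}"

lemma map_Rel:
  assumes B: "B \<subseteq> ET \<union> F" and r: "(a,b) \<in> Rel id B"
  shows "(kap a, kap b) \<in> (Rel AE (Bm B))\<^sup>*"
proof -
  obtain e where e: "e \<in> B" "id e = {a,b}" using r unfolding Rel_def by blast
  then have eB: "{a,b} \<in> B" by simp
  have edge: "(kap y, kap z) \<in> (Rel AE (Bm B))\<^sup>*"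
    if yz: "{y,z} \<in> B" "{y,z} \<in> ET" "y = pa z" "Suc (d y) = d z" for y z
  proof -
    have zV: "z \<in> V" using ET_pair[OF yz(2)] by blast
    have zn: "z \<noteq> v0" using yz(4) D1 by auto
    show ?thesis
    proof (cases "d z = i")
      case True
      then have zL: "z \<in> L" using zV L_iff by simp
      have "kap z = z" using kap_fix zL SV_iff L_iff by blast
      moreover have "kap y = v0" using yz(4) True unfolding kap_def by simp
      moreover have "Inl z \<in> Bm B" unfolding Bm_def using zL yz(1,3) by blast
      ultimately have "(kap y, kap z) \<in> Rel AE (Bm B)" using AE_Inl[of z] by (metis RelI)
      then show ?thesis by blast
    next
      case False
      then show ?thesis using kap_edge[OF zV zn] yz(3) by simp
    qed
  qed
  show ?thesis
  proof (cases "e \<in> ET")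
    case True
    then have eET: "{a,b} \<in> ET" using e by simp
    have "(a = pa b \<and> Suc (d a) = d b) \<or> (b = pa a \<and> Suc (d b) = d a)" by (rule classify[OF eET])
    then show ?thesis
    proof
      assume h: "a = pa b \<and> Suc (d a) = d b"
      show ?thesis using edge[OF eB eET] h by blast
    next
      assume h: "b = pa a \<and> Suc (d b) = d a"
      have "{b,a} = {a,b}" by (rule insert_commute)
      then have "{b,a} \<in> B" "{b,a} \<in> ET" using eB eET by simp_all
      then have "(kap b, kap a) \<in> (Rel AE (Bm B))\<^sup>*" using edge h by blast
      then show ?thesis by (rule rtr_sym)
    qed
  next
    case False
    then have "e \<in> F" using e B by blast
    then obtain p where p: "p \<in> hatP" "e = ech p" by blast
    have "p = kap ` {a,b}" using kap_img[OF p(1)] p(2) e(2) by simp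
    then have pe: "AE (Inr p) = {kap a, kap b}" using AE_Inr by simp
    have "Inr p \<in> Bm B" unfolding Bm_def using p e(1) by blast
    then have "(kap a, kap b) \<in> Rel AE (Bm B)" using pe by (rule RelI)
    then show ?thesis by blast
  qed
qed

lemma map_rtr:
  assumes B: "B \<subseteq> ET \<union> F" and r: "(a,b) \<in> (Rel id B)\<^sup>*"
  shows "(kap a, kap b) \<in> (Rel AE (Bm B))\<^sup>*"
  using r
proof (induction rule: rtrancl_induct)
  case base then show ?case by simp
next
  case (step y z)
  have "(kap y, kap z) \<in> (Rel AE (Bm B))\<^sup>*" by (rule map_Rel[OF B step(2)])
  then show ?case using step(3) by (rule rtrancl_trans[rotated])
qed

lemma aux_cycle:
  assumes p: "p \<in> hatP" and C: "simple_cycle id (ET \<union> F) C" and f: "ech p \<in> set C"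
  shows "\<exists>C'. simple_cycle AE (insert (Inr p) (Bm (set C - {ech p}))) C' \<and> Inr p \<in> set C'"
proof -
  define B where "B = set C - {ech p}"
  have BF: "B \<subseteq> ET \<union> F" using C unfolding B_def simple_cycle_def by blast
  obtain a b where ab: "id (ech p) = {a,b}" "(a,b) \<in> (Rel id B)\<^sup>*"
    using cycle_split[OF C f] unfolding B_def by blast
  have r: "(kap a, kap b) \<in> (Rel AE (Bm B))\<^sup>*" by (rule map_rtr[OF BF ab(2)])
  have pk: "p = {kap a, kap b}" using kap_img[OF p] ab(1) by simp
  obtain j q where jq: "p = {j,q}" "j \<noteq> q" using pair_props p hsub by blast
  have kab: "kap a \<noteq> kap b"
  proof
    assume "kap a = kap b"
    then have "{j,q} = {kap a}" using pk jq by simp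
    then show False using jq(2) by (simp add: doubleton_eq_iff)
  qed
  have nI: "Inr p \<notin> Bm B"
  proof
    assume "Inr p \<in> Bm B"
    then have "p \<in> {p\<in>hatP. ech p \<in> B}" unfolding Bm_def by blast
    then show False unfolding B_def by blast
  qed
  obtain es vs where P: "is_path AE (Bm B) (kap b) (kap a) es vs"
    using rtr_sym[OF r] unfolding reach_iff[symmetric] reach_def by blast
  have sB: "set es \<subseteq> Bm B" using P unfolding is_path_def by blast
  then have ne: "Inr p \<notin> set es" using nI by blast
  have "AE (Inr p) = {kap a, kap b}" using AE_Inr pk by simp
  then have "simple_cycle AE (insert (Inr p) (set es)) (es @ [Inr p])"
    by (rule path_to_cycle[OF P ne _ kab])
  moreover have "set (es @ [Inr p]) \<subseteq> insert (Inr p) (Bm B)" using sB by auto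
  ultimately have "simple_cycle AE (insert (Inr p) (Bm B)) (es @ [Inr p])" by (rule cycle_mono)
  then show ?thesis unfolding B_def by force
qed

lemma F_acyclic: "edge_acyclic id F"
  unfolding edge_acyclic_def
proof
  assume "\<exists>C. simple_cycle id F C"
  then obtain C where C: "simple_cycle id F C" by blast
  have "2 \<le> length C" using C unfolding simple_cycle_def by blast
  then have "0 < length C" by linarith
  then have "C ! 0 \<in> set C" by (rule nth_mem)
  moreover have "set C \<subseteq> F" using C unfolding simple_cycle_def by blast
  ultimately obtain p where p: "p \<in> hatP" "C ! 0 = ech p" by blast
  have C2: "simple_cycle id (ET \<union> F) C" using C by (rule cycle_mono) (use \<open>set C \<subseteq> F\<close> in blast)
  have f: "ech p \<in> set C" using p \<open>C ! 0 \<in> set C\<close> by simp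
  obtain C' where C': "simple_cycle AE (insert (Inr p) (Bm (set C - {ech p}))) C'"
    using aux_cycle[OF p(1) C2 f] by blast
  have emp: "{w\<in>L. {pa w, w} \<in> set C - {ech p}} = {}"
  proof -
    have "{pa w, w} \<notin> set C" if w: "w \<in> L" for w
    proof
      assume "{pa w, w} \<in> set C"
      then have "{pa w, w} \<in> F" using \<open>set C \<subseteq> F\<close> by blast
      moreover have "{pa w, w} \<in> ET" using L_par[OF w] .
      ultimately show False using F_ET by blast
    qed
    then show ?thesis by blast
  qed
  have "insert (Inr p) (Bm (set C - {ech p})) \<subseteq> Inr ` hatP" unfolding Bm_def emp using p(1) by blast
  then have "simple_cycle AE (Inr ` hatP) C'"
    using C' unfolding simple_cycle_def by blast
  then show False using acyc_aux unfolding edge_acyclic_def by blast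
qed

lemma orig_cycle:
  assumes p: "p \<in> hatP"
  shows "\<exists>C. simple_cycle id (ET \<union> F) C \<and> ech p \<in> set C"
proof -
  obtain x y where xy: "ech p = {x,y}" "x \<in> V" "y \<in> V" "x \<noteq> y" "ech p \<notin> ET" using kE[OF p] by blast
  obtain es vs where P: "is_path id ET y x es vs"
    using conn[OF xy(3) xy(2)] unfolding reach_iff[symmetric] reach_def by blast
  have sE: "set es \<subseteq> ET" using P unfolding is_path_def by blast
  then have ne: "ech p \<notin> set es" using xy(5) by blast
  have "id (ech p) = {x,y}" using xy(1) by simp
  then have "simple_cycle id (insert (ech p) (set es)) (es @ [ech p])"
    by (rule path_to_cycle[OF P ne _ xy(4)])
  moreover have "set (es @ [ech p]) \<subseteq> ET \<union> F" using sE p by auto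
  ultimately have "simple_cycle id (ET \<union> F) (es @ [ech p])" by (rule cycle_mono)
  then show ?thesis by force
qed

lemma SV_to_v0: "s \<in> SV \<Longrightarrow> (s, v0) \<in> (Rel AE (Inl ` L))\<^sup>*"
proof -
  assume s: "s \<in> SV"
  show ?thesis
  proof (cases "s = v0")
    case True then show ?thesis by simp
  next
    case False
    have "s = v0 \<or> (s \<in> V \<and> d s = i)" using s by (simp only: SV_iff)
    then have "s \<in> V \<and> d s = i" using False by blast
    then have sL: "s \<in> L" by (simp add: L_iff)
    have "{v0,s} = {s,v0}" by (rule insert_commute)
    then have eq: "AE (Inl s) = {s, v0}" using AE_Inl[of s] by simp
    have "Inl s \<in> Inl ` L" using sL by blast
    then have "(s, v0) \<in> Rel AE (Inl ` L)" using eq by (rule RelI)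
    then show ?thesis by blast
  qed
qed

lemma SV_conn: "s \<in> SV \<Longrightarrow> t \<in> SV \<Longrightarrow> (s, t) \<in> (Rel AE (Inl ` L))\<^sup>*"
proof -
  assume s: "s \<in> SV" and t: "t \<in> SV"
  have "(s, v0) \<in> (Rel AE (Inl ` L))\<^sup>*" using SV_to_v0[OF s] .
  moreover have "(v0, t) \<in> (Rel AE (Inl ` L))\<^sup>*" using rtr_sym[OF SV_to_v0[OF t]] .
  ultimately show ?thesis by (rule rtrancl_trans)
qed

lemma aux_cycle_ex:
  assumes p: "p \<in> hatP"
  shows "\<exists>C. simple_cycle AE AA C \<and> Inr p \<in> set C"
proof -
  obtain j q where jq: "p = {j,q}" "j \<in> SV" "q \<in> SV" "j \<noteq> q" using pair_props p hsub by blast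
  obtain es vs where P: "is_path AE (Inl ` L) q j es vs"
    using SV_conn[OF jq(3) jq(2)] unfolding reach_iff[symmetric] reach_def by blast
  have sE: "set es \<subseteq> Inl ` L" using P unfolding is_path_def by blast
  then have ne: "Inr p \<notin> set es" by blast
  have "AE (Inr p) = {j,q}" using AE_Inr jq by simp
  then have "simple_cycle AE (insert (Inr p) (set es)) (es @ [Inr p])"
    by (rule path_to_cycle[OF P ne _ jq(4)])
  moreover have "set (es @ [Inr p]) \<subseteq> AA" using sE p by auto
  ultimately have "simple_cycle AE AA (es @ [Inr p])" by (rule cycle_mono)
  then show ?thesis by force
qed

lemma aux_cost_nonneg: "\<forall>e\<in>Inl ` L. 0 \<le> aux_cost ET v0 c e"
  using AC_Inl L_par cnn by auto

lemma aux_price_nonneg: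
  assumes p: "p \<in> hatP"
  shows "0 \<le> price AE (Inl ` L) (aux_cost ET v0 c) (Inr ` hatP) (Inr p)"
proof -
  obtain C where "simple_cycle AE AA C" "Inr p \<in> set C" using aux_cycle_ex[OF p] by blast
  then show ?thesis using price_nonneg[OF fin_aux _ _ aux_cost_nonneg] by blast
qed

lemma price_cmp:
  assumes p: "p \<in> hatP"
  shows "price AE (Inl ` L) (aux_cost ET v0 c) (Inr ` hatP) (Inr p) \<le> price id ET c F (ech p)"
proof -
  obtain C0 where C0: "simple_cycle id (ET \<union> F) C0" "ech p \<in> set C0" using orig_cycle[OF p] by blast
  obtain C where C: "simple_cycle id (ET \<union> F) C" "ech p \<in> set C" "price id ET c F (ech p) = red_max c ET C"
    using price_attained[OF fin_orig C0] by blast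
  obtain C' where C': "simple_cycle AE (insert (Inr p) (Bm (set C - {ech p}))) C'" "Inr p \<in> set C'"
    using aux_cycle[OF p C(1,2)] by blast
  have "insert (Inr p) (Bm (set C - {ech p})) \<subseteq> AA" unfolding Bm_def using p by auto
  then have C'A: "simple_cycle AE AA C'" using C'(1) unfolding simple_cycle_def by blast
  have pl: "price AE (Inl ` L) (aux_cost ET v0 c) (Inr ` hatP) (Inr p) \<le> red_max (aux_cost ET v0 c) (Inl ` L) C'"
    by (rule price_le[OF fin_aux C'A C'(2)])
  have sC': "set C' \<subseteq> insert (Inr p) (Bm (set C - {ech p}))" using C'(1) unfolding simple_cycle_def by blast
  have nnC: "0 \<le> red_max c ET C" using cnn by (intro red_max_nonneg) blast
  have "red_max (aux_cost ET v0 c) (Inl ` L) C' \<le> red_max c ET C"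
  proof (cases "set C' \<inter> Inl ` L = {}")
    case True
    then have "red_max (aux_cost ET v0 c) (Inl ` L) C' = 0" unfolding red_max_def by simp
    then show ?thesis using nnC by simp
  next
    case False
    have "Max (aux_cost ET v0 c ` (set C' \<inter> Inl ` L)) \<in> aux_cost ET v0 c ` (set C' \<inter> Inl ` L)"
      using False by (intro Max_in) auto
    then obtain w where w: "Inl w \<in> set C'" "w \<in> L"
      "Max (aux_cost ET v0 c ` (set C' \<inter> Inl ` L)) = c {pa w, w}"
      using AC_Inl by auto
    have "Inl w \<in> Bm (set C - {ech p})" using w(1) sC' by blast
    then have wC: "{pa w, w} \<in> set C" unfolding Bm_def by auto
    have wE: "{pa w, w} \<in> set C \<inter> ET" using wC L_par[OF w(2)] by blast
    then have ne: "set C \<inter> ET \<noteq> {}" by blast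
    have "c {pa w, w} \<le> Max (c ` (set C \<inter> ET))" using wE by (intro Max_ge) auto
    then show ?thesis unfolding red_max_def using False ne w(3) by simp
  qed
  then show ?thesis using pl C(3) by simp
qed

lemma aux_st: "spanning_tree AE SV AA (Inl ` L)"
proof -
  have conn': "connected_on AE SV (Inl ` L)"
    unfolding connected_on_def reach_iff using SV_conn by blast
  have ac: "edge_acyclic AE (Inl ` L)"
    unfolding edge_acyclic_def
  proof
    assume "\<exists>C. simple_cycle AE (Inl ` L) C"
    then obtain C where C: "simple_cycle AE (Inl ` L) C" by blast
    have "2 \<le> length C" using C unfolding simple_cycle_def by blast
    then have "0 < length C" by linarith
    then have c0: "C ! 0 \<in> set C" by (rule nth_mem)
    moreover have sC: "set C \<subseteq> Inl ` L" using C unfolding simple_cycle_def by blast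
    ultimately obtain w where w: "w \<in> L" "C ! 0 = Inl w" by blast
    have wC: "Inl w \<in> set C" using c0 w by simp
    obtain a b where ab: "AE (Inl w) = {a,b}" "(a,b) \<in> (Rel AE (set C - {Inl w}))\<^sup>*"
      using cycle_split[OF C wC] by blast
    have wv: "w \<noteq> v0" using L_notv0 w by simp
    have iso: "\<And>y z. (y,z) \<in> Rel AE (set C - {Inl w}) \<Longrightarrow> y \<noteq> w \<and> z \<noteq> w"
    proof -
      fix y z assume "(y,z) \<in> Rel AE (set C - {Inl w})"
      then obtain e where e: "e \<in> set C - {Inl w}" "AE e = {y,z}" unfolding Rel_def by blast
      then obtain w' where w': "e = Inl w'" "w' \<noteq> w" using sC by blast
      then have eq: "{y,z} = {v0,w'}" using e AE_Inl by simp
      have yz: "y \<in> {y,z}" "z \<in> {y,z}" by simp_all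
      then have "y \<in> {v0,w'}" "z \<in> {v0,w'}" unfolding eq .
      then show "y \<noteq> w \<and> z \<noteq> w" using w'(2) wv by auto
    qed
    have abw: "{a,b} = {v0,w}" using ab(1) AE_Inl by simp
    then have "(a = v0 \<and> b = w) \<or> (a = w \<and> b = v0)" by (simp add: doubleton_eq_iff)
    then show False
    proof
      assume h: "a = v0 \<and> b = w"
      have "(v0, w) \<in> (Rel AE (set C - {Inl w}))\<^sup>*" using ab(2) h by simp
      then show False
      proof (cases rule: rtranclE)
        case base then show False using wv by simp
      next
        case (step y) then show False using iso by blast
      qed
    next
      assume h: "a = w \<and> b = v0"
      have "(w, v0) \<in> (Rel AE (set C - {Inl w}))\<^sup>*" using ab(2) h by simp
      then show False
      proof (cases rule: converse_rtranclE)
        case base then show False using wv by simp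
      next
        case (step y) then show False using iso by blast
      qed
    qed
  qed
  show ?thesis unfolding spanning_tree_def using conn' ac by blast
qed

end

theorem lemma7:
  fixes V :: "'v set" and ET :: "'v set set" and c :: "'v set \<Rightarrow> real"
    and \<gamma> :: "'v set \<Rightarrow> real" and \<Delta> :: real and v0 :: 'v and i :: nat
    and ech :: "'v set \<Rightarrow> 'v set" and hatP :: "'v set set"
  assumes tree: "is_tree V ET"
    and c_nonneg: "\<forall>e\<in>ET. 0 \<le> c e"
    and gamma_nonneg: "\<forall>x\<in>V. \<forall>y\<in>V. x \<noteq> y \<and> {x, y} \<notin> ET \<longrightarrow> 0 \<le> \<gamma> {x, y}"
    and center: "is_center V ET v0"
    and i_ge: "1 \<le> i" and i_le: "i \<le> height V ET v0"
    and ech: "\<forall>p\<in>aux_pairs V ET v0 i. ech p \<in> cand V ET v0 i p \<and>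
                 (\<forall>e\<in>cand V ET v0 i p. \<gamma> (ech p) \<le> \<gamma> e)"
    and hatP_sub: "hatP \<subseteq> aux_pairs V ET v0 i"
    and budget: "(\<Sum>p\<in>hatP. \<gamma> (ech p)) \<le> \<Delta>"
    and stars: "forest_of_stars (aux_ends v0) (star_vertices V ET v0 i) (Inr ` hatP)"
  shows "revenue id V ET c (ech ` hatP) \<ge>
         revenue (aux_ends v0) (star_vertices V ET v0 i) (Inl ` level V ET v0 i)
                 (aux_cost ET v0 c) (Inr ` hatP)"
proof -
  have v0V: "v0 \<in> V" using center unfolding is_center_def by blast
  have acA: "edge_acyclic (aux_ends v0) (Inr ` hatP)" using stars unfolding forest_of_stars_def by blast
  have echin: "\<forall>p\<in>aux_pairs V ET v0 i. ech p \<in> cand V ET v0 i p" using ech by blast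
  interpret t: tctx3 V ET v0 i hatP ech c
    by (unfold_locales) (rule tree, rule v0V, rule i_ge, rule hatP_sub, rule echin, rule acA, rule c_nonneg)
  define Fo where "Fo = ech ` hatP"
  define Fa where "Fa = (Inr ` hatP :: ('v + 'v set) set)"
  define La where "La = (Inl ` level V ET v0 i :: ('v + 'v set) set)"
  define SV where "SV = star_vertices V ET v0 i"
  define po where "po = price id ET c Fo"
  define pa' where "pa' = price (aux_ends v0) La (aux_cost ET v0 c) Fa"
  have finO: "finite (ET \<union> Fo)" unfolding Fo_def by (rule t.fin_orig)
  have disjO: "ET \<inter> Fo = {}" unfolding Fo_def using t.F_ET by blast
  have stO: "spanning_tree id V (ET \<union> Fo) ET"
    using tree unfolding is_tree_def spanning_tree_def by blast
  have acO: "edge_acyclic id Fo" unfolding Fo_def by (rule t.F_acyclic)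
  have endsO: "\<forall>e\<in>Fo. \<exists>x y. id e = {x,y} \<and> x \<in> V \<and> y \<in> V \<and> x \<noteq> y"
  proof
    fix e assume "e \<in> Fo"
    then obtain p where p: "p \<in> hatP" "e = ech p" unfolding Fo_def by blast
    then show "\<exists>x y. id e = {x,y} \<and> x \<in> V \<and> y \<in> V \<and> x \<noteq> y" using t.kE[OF p(1)] by auto
  qed
  obtain So where So: "is_mst id V ET c Fo So" "Fo \<subseteq> So"
    using mst_contains[OF finO disjO stO acO endsO] by blast
  define Xo where "Xo = {sum po (S \<inter> Fo) | S. is_mst id V ET c Fo S}"
  have "Xo \<subseteq> (\<lambda>S. sum po (S \<inter> Fo)) ` Pow (ET \<union> Fo)"
    unfolding Xo_def is_mst_def spanning_tree_def by blast
  then have finXo: "finite Xo" using finO by (meson finite_Pow_iff finite_imageI finite_subset)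
  have "sum po Fo \<in> Xo" unfolding Xo_def using So by (metis (mono_tags, lifting) inf.absorb2 mem_Collect_eq)
  then have revO: "sum po Fo \<le> revenue id V ET c Fo"
    unfolding revenue_def Xo_def[symmetric] po_def[symmetric] using finXo by (rule Max_ge[rotated])
  have sumO: "sum po Fo = (\<Sum>p\<in>hatP. po (ech p))"
    unfolding Fo_def by (simp add: sum.reindex[OF t.inj_ech])
  have finA: "finite (La \<union> Fa)" unfolding La_def Fa_def by (rule t.fin_aux)
  have disjA: "La \<inter> Fa = {}" unfolding La_def Fa_def by blast
  have stA: "spanning_tree (aux_ends v0) SV (La \<union> Fa) La"
    unfolding La_def Fa_def SV_def by (rule t.aux_st)
  have acA': "edge_acyclic (aux_ends v0) Fa" unfolding Fa_def by (rule acA)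
  have endsA: "\<forall>e\<in>Fa. \<exists>x y. aux_ends v0 e = {x,y} \<and> x \<in> SV \<and> y \<in> SV \<and> x \<noteq> y"
  proof
    fix e assume "e \<in> Fa"
    then obtain p where p: "p \<in> hatP" "e = Inr p" unfolding Fa_def by blast
    obtain j q where jq: "p = {j,q}" "j \<in> SV" "q \<in> SV" "j \<noteq> q"
      using t.pair_props p(1) hatP_sub unfolding SV_def by blast
    have "aux_ends v0 e = {j,q}" using p(2) jq(1) t.AE_Inr by simp
    then show "\<exists>x y. aux_ends v0 e = {x,y} \<and> x \<in> SV \<and> y \<in> SV \<and> x \<noteq> y" using jq by blast
  qed
  obtain Sa where Sa: "is_mst (aux_ends v0) SV La (aux_cost ET v0 c) Fa Sa"
    using mst_contains[OF finA disjA stA acA' endsA] by blast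
  define Xa where "Xa = {sum pa' (S \<inter> Fa) | S. is_mst (aux_ends v0) SV La (aux_cost ET v0 c) Fa S}"
  have "Xa \<subseteq> (\<lambda>S. sum pa' (S \<inter> Fa)) ` Pow (La \<union> Fa)"
    unfolding Xa_def is_mst_def spanning_tree_def by blast
  then have finXa: "finite Xa" using finA by (meson finite_Pow_iff finite_imageI finite_subset)
  have neXa: "Xa \<noteq> {}" unfolding Xa_def using Sa by blast
  have finFa: "finite Fa" using finA by simp
  have nnA: "\<forall>e\<in>Fa. 0 \<le> pa' e"
  proof
    fix e assume "e \<in> Fa"
    then obtain p where p: "p \<in> hatP" "e = Inr p" unfolding Fa_def by blast
    show "0 \<le> pa' e" unfolding pa'_def La_def Fa_def p(2) by (rule t.aux_price_nonneg[OF p(1)])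
  qed
  have bnd: "\<forall>x\<in>Xa. x \<le> sum pa' Fa"
  proof
    fix x assume "x \<in> Xa"
    then obtain S where x: "x = sum pa' (S \<inter> Fa)" unfolding Xa_def by blast
    have "sum pa' (S \<inter> Fa) \<le> sum pa' Fa"
      by (rule sum_mono2[OF finFa]) (use nnA in auto)
    then show "x \<le> sum pa' Fa" using x by simp
  qed
  have revA: "revenue (aux_ends v0) SV La (aux_cost ET v0 c) Fa \<le> sum pa' Fa"
    unfolding revenue_def Xa_def[symmetric] pa'_def[symmetric] using Max_le_iff[OF finXa neXa] bnd by blast
  have sumA: "sum pa' Fa = (\<Sum>p\<in>hatP. pa' (Inr p))"
    unfolding Fa_def by (simp add: sum.reindex)
  have cmp: "(\<Sum>p\<in>hatP. pa' (Inr p)) \<le> (\<Sum>p\<in>hatP. po (ech p))"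
  proof (rule sum_mono)
    fix p assume p: "p \<in> hatP"
    show "pa' (Inr p) \<le> po (ech p)" unfolding pa'_def po_def La_def Fa_def Fo_def
      by (rule t.price_cmp[OF p])
  qed
  have "revenue (aux_ends v0) SV La (aux_cost ET v0 c) Fa \<le> revenue id V ET c Fo"
    using revA sumA cmp sumO revO by linarith
  then show ?thesis unfolding SV_def La_def Fa_def Fo_def .
qed

end
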